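(* Let $\nu_1,\dots,\nu_p>0$ and let $\eta_1,\dots,\eta_p$ be independent random variables with $\eta_j\sim\mathcal P(\nu_j)$ (Poisson with mean $\nu_j$). Set $\boldsymbol\eta=(\eta_1,\dots,\eta_p)$, $\boldsymbol\nu=(\nu_1,\dots,\nu_p)$ and $\nu_\infty=\max_j\nu_j$. Then for every $u$ satisfying $\nu_\infty^{-3/2}\le u\le 0.9\,\nu_\infty^{3/2}$, $$\mathbf P\Big(\|\boldsymbol\eta-\boldsymbol\nu\|_2^2-\|\boldsymbol\eta\|_1\ge \nu_\infty\sqrt p\,u\Big)\le(2p+1)e^{-cu^{2/3}},$$ where $c\ge 0.38$ is a universal constant (one may take $c=12^{1/3}/6$).
   Context: $\|\cdot\|_2$ and $\|\cdot\|_1$ are the Euclidean and $\ell_1$ norms on $\mathbb R^p$. *)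

theory Defs
  imports "HOL-Probability.Probability"
begin

end

theory Submission
  imports Defs
begin

lemma ln_lower2:
  fixes x :: real assumes "x \<ge> 0"
  shows "2*x/(2+x) \<le> ln (1+x)"
proof -
  let ?f = "\<lambda>x::real. ln (1+x) - 2*x/(2+x)"
  have "?f 0 \<le> ?f x"
  proof (rule DERIV_nonneg_imp_nondecreasing[OF assms])
    fix y :: real assume y: "0 \<le> y" "y \<le> x"
    have d: "(?f has_real_derivative (1/(1+y) - 4/(2+y)^2)) (at y)"
      using y apply (intro derivative_eq_intros)
      apply (rule refl | simp add: power2_eq_square)+
      done
    have "1/(1+y) - 4/(2+y)^2 = y^2/((1+y)*(2+y)^2)"
      using y apply (simp add: divide_simps power2_eq_square)
      apply (simp add: algebra_simps)
      done
    also have "\<dots> \<ge> 0" using y by simp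
    finally show "\<exists>d. (?f has_real_derivative d) (at y) \<and> d \<ge> 0" using d by blast
  qed
  thus ?thesis by simp
qed

lemma exp_neg_upper:
  fixes x :: real assumes "x \<ge> 0"
  shows "exp (-x) \<le> 1 - x + x^2/2"
proof -
  let ?f = "\<lambda>x::real. 1 - x + x^2/2 - exp (-x)"
  have "?f 0 \<le> ?f x"
  proof (rule DERIV_nonneg_imp_nondecreasing[OF assms])
    fix y :: real assume y: "0 \<le> y" "y \<le> x"
    have d: "(?f has_real_derivative (-1 + y + exp (-y))) (at y)"
      by (auto intro!: derivative_eq_intros simp: field_simps power2_eq_square)
    have "-1 + y + exp (-y) \<ge> 0" using exp_ge_add_one_self[of "-y"] by simp
    thus "\<exists>d. (?f has_real_derivative d) (at y) \<and> d \<ge> 0" using d by blast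
  qed
  thus ?thesis by simp
qed

lemma poisson_mgf:
  fixes \<nu> s :: real assumes "\<nu> > 0"
  shows "(\<lambda>k. pmf (poisson_pmf \<nu>) k * exp (s * real k)) sums exp (\<nu> * (exp s - 1))"
proof -
  have "(\<lambda>k. exp (-\<nu>) * ((\<nu> * exp s)^k / fact k)) sums (exp (-\<nu>) * exp (\<nu> * exp s))"
    using exp_converges[of "\<nu> * exp s"] by (intro sums_mult) (simp add: divide_inverse mult.commute)
  moreover have "(\<lambda>k. pmf (poisson_pmf \<nu>) k * exp (s * real k)) = (\<lambda>k. exp (-\<nu>) * ((\<nu> * exp s)^k / fact k))"
    using assms by (auto simp: power_mult_distrib exp_of_nat_mult[symmetric] mult.commute)
  moreover have "exp (-\<nu>) * exp (\<nu> * exp s) = exp (\<nu> * (exp s - 1))"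
    by (simp add: mult_exp_exp algebra_simps)
  ultimately show ?thesis by simp
qed

lemma prob_le_sum:
  fixes q :: "nat pmf" and f :: "nat \<Rightarrow> real"
  assumes f: "\<And>k. f k \<ge> 0" "\<And>k. k \<in> A \<Longrightarrow> 1 \<le> f k"
    and sm: "summable (\<lambda>k. pmf q k * f k)"
  shows "measure_pmf.prob q A \<le> (\<Sum>k. pmf q k * f k)"
proof -
  have "emeasure (measure_pmf q) A = (\<integral>\<^sup>+x. indicator A x \<partial>measure_pmf q)"
    by simp
  also have "\<dots> \<le> (\<integral>\<^sup>+x. ennreal (f x) \<partial>measure_pmf q)"
    using f by (intro nn_integral_mono) (auto split: split_indicator)
  also have "\<dots> = (\<integral>\<^sup>+x. ennreal (pmf q x * f x) \<partial>count_space UNIV)"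
    by (simp add: nn_integral_measure_pmf ennreal_mult f)
  also have "\<dots> = (\<Sum>k. ennreal (pmf q k * f k))"
    by (simp add: nn_integral_count_space_nat)
  also have "\<dots> = ennreal (\<Sum>k. pmf q k * f k)"
    using sm f by (intro suminf_ennreal2) auto
  finally have "ennreal (measure_pmf.prob q A) \<le> ennreal (\<Sum>k. pmf q k * f k)"
    by (simp add: measure_pmf.emeasure_eq_measure)
  moreover have "(\<Sum>k. pmf q k * f k) \<ge> 0" using sm f by (intro suminf_nonneg) auto
  ultimately show ?thesis by (simp add: ennreal_le_iff)
qed

lemma poisson_upper_tail:
  fixes \<nu> t :: real assumes nu: "\<nu> > 0" and t: "t \<ge> 0"
  shows "measure_pmf.prob (poisson_pmf \<nu>) {k. \<nu> + t \<le> real k} \<le> exp (- (t^2 / (2*\<nu> + t)))"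
proof -
  define s where "s = ln (1 + t/\<nu>)"
  have s0: "s \<ge> 0" using nu t by (simp add: s_def)
  have es: "exp s = 1 + t/\<nu>" using nu t unfolding s_def by (subst exp_ln) (auto intro: add_pos_nonneg)
  define f where "f k = exp (s * real k) * exp (- s * (\<nu> + t))" for k :: nat
  have sm: "(\<lambda>k. pmf (poisson_pmf \<nu>) k * f k) sums (exp (\<nu> * (exp s - 1)) * exp (- s * (\<nu> + t)))"
    unfolding f_def using sums_mult2[OF poisson_mgf[OF nu, of s]] by (simp add: mult.assoc)
  have "measure_pmf.prob (poisson_pmf \<nu>) {k. \<nu> + t \<le> real k} \<le> (\<Sum>k. pmf (poisson_pmf \<nu>) k * f k)"
  proof (rule prob_le_sum)
    fix k :: nat assume "k \<in> {k. \<nu> + t \<le> real k}"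
    hence "s * (\<nu> + t) \<le> s * real k" using s0 by (intro mult_left_mono) auto
    thus "1 \<le> f k" unfolding f_def by (simp add: mult_exp_exp)
  qed (use sm in \<open>auto simp: f_def sums_iff\<close>)
  also have "\<dots> = exp (t - s * (\<nu> + t))"
    using sm nu by (simp add: sums_iff es mult_exp_exp)
  also have "\<dots> \<le> exp (- (t^2 / (2*\<nu> + t)))"
  proof -
    have "2*(t/\<nu>)/(2+t/\<nu>) \<le> s" unfolding s_def using nu t by (intro ln_lower2) auto
    also have "2*(t/\<nu>)/(2+t/\<nu>) = 2*t/(2*\<nu>+t)" using nu t by (simp add: field_simps)
    finally have "2*t/(2*\<nu>+t) * (\<nu> + t) \<le> s * (\<nu>+t)" using nu t by (intro mult_right_mono) auto
    moreover have "t - 2*t/(2*\<nu>+t) * (\<nu> + t) = - (t^2 / (2*\<nu> + t))"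
      using nu t by (simp add: field_simps power2_eq_square)
    ultimately show ?thesis by simp
  qed
  finally show ?thesis .
qed

lemma poisson_lower_tail:
  fixes \<nu> t :: real assumes nu: "\<nu> > 0" and t: "t \<ge> 0"
  shows "measure_pmf.prob (poisson_pmf \<nu>) {k. real k \<le> \<nu> - t} \<le> exp (- (t^2 / (2*\<nu>)))"
proof -
  define s where "s = t/\<nu>"
  have s0: "s \<ge> 0" using nu t by (simp add: s_def)
  define f where "f k = exp ((-s) * real k) * exp (s * (\<nu> - t))" for k :: nat
  have sm: "(\<lambda>k. pmf (poisson_pmf \<nu>) k * f k) sums (exp (\<nu> * (exp (-s) - 1)) * exp (s * (\<nu> - t)))"
    unfolding f_def using sums_mult2[OF poisson_mgf[OF nu, of "-s"]] by (simp add: mult.assoc)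
  have "measure_pmf.prob (poisson_pmf \<nu>) {k. real k \<le> \<nu> - t} \<le> (\<Sum>k. pmf (poisson_pmf \<nu>) k * f k)"
  proof (rule prob_le_sum)
    fix k :: nat assume "k \<in> {k. real k \<le> \<nu> - t}"
    hence "s * real k \<le> s * (\<nu> - t)" using s0 by (intro mult_left_mono) auto
    thus "1 \<le> f k" unfolding f_def by (simp add: mult_exp_exp)
  qed (use sm in \<open>auto simp: f_def sums_iff\<close>)
  also have "\<dots> = exp (\<nu> * (exp (-s) - 1) + s * (\<nu> - t))"
    using sm by (simp add: sums_iff mult_exp_exp)
  also have "\<dots> \<le> exp (- (t^2 / (2*\<nu>)))"
  proof -
    have "\<nu> * (exp (-s) - 1) \<le> \<nu> * (- s + s^2/2)"
      using exp_neg_upper[OF s0] nu by (intro mult_left_mono) auto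
    moreover have "\<nu> * (- s + s^2/2) + s * (\<nu> - t) = - (t^2 / (2*\<nu>))"
      using nu by (simp add: s_def field_simps power2_eq_square)
    ultimately show ?thesis by simp
  qed
  finally show ?thesis .
qed

lemma poisson_G:
  fixes \<nu> :: real assumes nu: "\<nu> > 0"
  shows "(\<Sum>k<n. pmf (poisson_pmf \<nu>) k * ((real k - \<nu>)^2 - real k)) = real n * (\<nu> - real n + 1) * pmf (poisson_pmf \<nu>) n"
proof (induction n)
  case 0 then show ?case by simp
next
  case (Suc n)
  have p: "pmf (poisson_pmf \<nu>) (Suc n) = pmf (poisson_pmf \<nu>) n * \<nu> / (real n + 1)"
    using nu by (simp add: field_simps)
  have aux: "real n * (\<nu> - real n + 1) * a + a * ((real n - \<nu>)^2 - real n) =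
     (1 + real n) * (\<nu> - (1 + real n) + 1) * (a * \<nu> / (real n + 1))" for a
    by (simp add: field_simps power2_eq_square)
  show ?case unfolding sum.lessThan_Suc p Suc.IH using aux[of "pmf (poisson_pmf \<nu>) n"]
    by (simp only: of_nat_Suc)
qed

lemma trunc_exp_nonpos:
  fixes \<nu> t :: real assumes nu: "\<nu> > 0" and t: "t \<ge> 1"
  shows "measure_pmf.expectation (poisson_pmf \<nu>)
     (\<lambda>k. if \<nu> - t \<le> real k \<and> real k \<le> \<nu> + t then (real k - \<nu>)^2 - real k else 0) \<le> 0"
proof -
  define M where "M = nat \<lfloor>\<nu>+t\<rfloor> + 1"
  define L where "L = nat \<lceil>\<nu>-t\<rceil>"
  define X where "X k = pmf (poisson_pmf \<nu>) k * ((real k - \<nu>)^2 - real k)" for k :: nat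
  have M: "real k \<le> \<nu> + t \<longleftrightarrow> k < M" for k
  proof -
    have "\<lfloor>\<nu>+t\<rfloor> \<ge> 0" using nu t by simp
    hence "k < M \<longleftrightarrow> int k \<le> \<lfloor>\<nu>+t\<rfloor>" unfolding M_def by (simp add: le_nat_iff less_Suc_eq_le)
    thus ?thesis by (simp add: le_floor_iff)
  qed
  have L: "\<nu> - t \<le> real k \<longleftrightarrow> L \<le> k" for k
    unfolding L_def by (simp add: nat_le_iff ceiling_le_iff)
  have "measure_pmf.expectation (poisson_pmf \<nu>)
     (\<lambda>k. if \<nu> - t \<le> real k \<and> real k \<le> \<nu> + t then (real k - \<nu>)^2 - real k else 0)
     = (\<Sum>k\<in>{..<M}. (if \<nu> - t \<le> real k \<and> real k \<le> \<nu> + t then (real k - \<nu>)^2 - real k else 0) * pmf (poisson_pmf \<nu>) k)"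
    by (rule integral_measure_pmf_real) (auto simp: M split: if_splits)
  also have "\<dots> = (\<Sum>k\<in>{L..<M}. X k)"
    by (rule sum.mono_neutral_cong_right) (auto simp: M L X_def)
  also have "\<dots> = (\<Sum>k<M. X k) - (\<Sum>k<L. X k)"
  proof -
    have "\<not> real M \<le> \<nu> + t" using M[of M] by simp
    hence "\<nu> - t \<le> real M" using t by linarith
    hence "L \<le> M" using L by blast
    thus ?thesis using sum_diff_nat_ivl[of 0 L M X] by (simp add: atLeast0LessThan)
  qed
  also have "\<dots> = real M * (\<nu> - real M + 1) * pmf (poisson_pmf \<nu>) M - real L * (\<nu> - real L + 1) * pmf (poisson_pmf \<nu>) L"
    unfolding X_def using poisson_G[OF nu] by simp
  also have "\<dots> \<le> 0"
  proof -
    have "\<nu> - real M + 1 \<le> 0" using M[of M] t by auto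
    hence a: "real M * (\<nu> - real M + 1) * pmf (poisson_pmf \<nu>) M \<le> 0"
      by (simp add: mult_nonneg_nonpos mult_nonpos_nonneg)
    have "\<nu> - real L + 1 \<ge> 0"
    proof (cases "L = 0")
      case False
      hence "\<not> (\<nu> - t \<le> real (L - 1))" using L[of "L-1"] by auto
      thus ?thesis using False t by (simp add: of_nat_diff)
    qed (use nu in auto)
    hence "real L * (\<nu> - real L + 1) * pmf (poisson_pmf \<nu>) L \<ge> 0" by simp
    with a show ?thesis by simp
  qed
  finally show ?thesis .
qed

lemma component_prob:
  fixes p :: nat
  assumes "j < p"
  shows "measure_pmf.prob (Pi_pmf {..<p} 0 (\<lambda>j. poisson_pmf (\<nu> j))) {\<eta>. P (\<eta> j)}
         = measure_pmf.prob (poisson_pmf (\<nu> j)) {k. P k}"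
proof -
  have "measure_pmf.prob (map_pmf (\<lambda>f. f j) (Pi_pmf {..<p} 0 (\<lambda>j. poisson_pmf (\<nu> j)))) {k. P k}
        = measure_pmf.prob (Pi_pmf {..<p} 0 (\<lambda>j. poisson_pmf (\<nu> j))) {\<eta>. P (\<eta> j)}"
    by (simp add: vimage_def)
  also have "map_pmf (\<lambda>f. f j) (Pi_pmf {..<p} 0 (\<lambda>j. poisson_pmf (\<nu> j))) = poisson_pmf (\<nu> j)"
    using assms by (subst Pi_pmf_component) auto
  finally show ?thesis by simp
qed

lemma component_exp:
  fixes p :: nat
  assumes "j < p"
  shows "measure_pmf.expectation (Pi_pmf {..<p} 0 (\<lambda>j. poisson_pmf (\<nu> j))) (\<lambda>\<eta>. (f (\<eta> j) :: real))
         = measure_pmf.expectation (poisson_pmf (\<nu> j)) f"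
proof -
  have "measure_pmf.expectation (map_pmf (\<lambda>f. f j) (Pi_pmf {..<p} 0 (\<lambda>j. poisson_pmf (\<nu> j)))) f
        = measure_pmf.expectation (Pi_pmf {..<p} 0 (\<lambda>j. poisson_pmf (\<nu> j))) (\<lambda>\<eta>. f (\<eta> j))"
    by simp
  also have "map_pmf (\<lambda>f. f j) (Pi_pmf {..<p} 0 (\<lambda>j. poisson_pmf (\<nu> j))) = poisson_pmf (\<nu> j)"
    using assms by (subst Pi_pmf_component) auto
  finally show ?thesis by simp
qed

lemma c_bounds: "0 < root 3 12 / 6" "root 3 12 / 6 \<le> ((191/500)::real)"
proof -
  show "0 < root 3 12 / 6" by simp
  have "root 3 12 \<le> root 3 (((573/250)::real)^3)" by (subst real_root_le_iff) (auto simp: power3_eq_cube)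
  also have "\<dots> = (573/250)" by (rule real_root_power_cancel) auto
  finally show "root 3 12 / 6 \<le> ((191/500)::real)" by simp
qed

theorem lemma2p2:
  fixes p :: nat and \<nu> :: "nat \<Rightarrow> real" and u :: real
  assumes "p \<ge> 1"
    and "\<And>j. j < p \<Longrightarrow> \<nu> j > 0"
    and "(Max (\<nu> ` {..<p})) powr (-3/2) \<le> u"
    and "u \<le> 0.9 * (Max (\<nu> ` {..<p})) powr (3/2)"
  shows "measure_pmf.prob (Pi_pmf {..<p} 0 (\<lambda>j. poisson_pmf (\<nu> j)))
           {\<eta>. (\<Sum>j<p. (real (\<eta> j) - \<nu> j)^2) - (\<Sum>j<p. real (\<eta> j))
                 \<ge> Max (\<nu> ` {..<p}) * sqrt (real p) * u}
         \<le> (2 * real p + 1) * exp (- (root 3 12 / 6) * u powr (2/3))"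
proof -
  define N where "N = Max (\<nu> ` {..<p})"
  define c where "c = root 3 12 / (6::real)"
  define w where "w = u powr (2/3)"
  define Q where "Q = Pi_pmf {..<p} 0 (\<lambda>j. poisson_pmf (\<nu> j))"
  define E where "E = {\<eta>. (\<Sum>j<p. (real (\<eta> j) - \<nu> j)^2) - (\<Sum>j<p. real (\<eta> j))
                 \<ge> Max (\<nu> ` {..<p}) * sqrt (real p) * u}"
  have p0: "0 < p" using assms(1) by simp
  have nuN: "\<nu> j \<le> N" if "j < p" for j unfolding N_def using that by (intro Max_ge) auto
  have N0: "N > 0" using nuN[OF p0] assms(2)[OF p0] by linarith
  have c0: "0 < c" and c1: "c \<le> (191/500)" using c_bounds unfolding c_def by auto
  have u0: "u > 0" using assms(3) N0 unfolding N_def[symmetric] by (smt (verit) powr_gt_zero)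
  have w0: "w > 0" unfolding w_def using u0 by simp
  have wu: "w^3 = u^2"
  proof -
    have "w^3 = w powr (real 3)" using w0 by (simp add: powr_realpow)
    also have "\<dots> = u powr 2" unfolding w_def by (simp add: powr_powr)
    also have "\<dots> = u^2" using u0 powr_realpow[of u 2] by simp
    finally show ?thesis .
  qed
  have wN: "w \<le> N"
  proof -
    have "u \<le> N powr (3/2)" using assms(4) powr_ge_zero[of N "3/2"] unfolding N_def[symmetric] by linarith
    hence "w \<le> (N powr (3/2)) powr (2/3)" unfolding w_def using u0 by (intro powr_mono2) auto
    also have "\<dots> = N" using N0 by (simp add: powr_powr)
    finally show ?thesis .
  qed
  show ?thesis
  proof (cases "c * w \<le> 1")
    case True
    have "measure_pmf.prob Q E \<le> 1" by simp
    also have "1 \<le> 3 * exp (-1::real)" using exp_le by (simp add: exp_minus field_simps)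
    also have "3 * exp (-1::real) \<le> (2 * real p + 1) * exp (- c * w)"
      using True p0 by (intro mult_mono) auto
    finally show ?thesis unfolding Q_def E_def c_def w_def by simp
  next
    case False
    hence cw: "c * w > 1" by simp
    have w1: "w \<ge> (13/5)"
    proof (rule ccontr)
      assume "\<not> w \<ge> (13/5)"
      hence "c * w \<le> (191/500) * (13/5)" using c0 c1 w0 by (intro mult_mono) auto
      thus False using cw by simp
    qed
    define t where "t = sqrt (5/4 * N * w)"
    have t2: "t^2 = 5/4 * N * w" unfolding t_def using N0 w0 by simp
    have t0: "t \<ge> 0" unfolding t_def using N0 w0 by simp
    have t1: "t \<ge> 1"
    proof -
      have "(13/5)*(13/5) \<le> N*w" using w1 wN by (intro mult_mono) auto
      hence "1 \<le> 5/4 * N * w" by simp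
      thus ?thesis unfolding t_def by simp
    qed
    have tN: "t \<le> (28/25) * N"
    proof -
      have "N*w \<le> N*N" using wN N0 by (intro mult_left_mono) auto
      moreover have "5/4*N*w = 5/4*(N*w)" by (simp only: mult.assoc)
      moreover have "0 \<le> N*N" by simp
      ultimately have a: "t^2 \<le> (784/625) * (N*N)" unfolding t2 by linarith
      have b: "((28/25) * N)^2 = (784/625) * (N*N)" by (simp add: power2_eq_square)
      have "t^2 \<le> ((28/25) * N)^2" using a b by linarith
      moreover have "0 \<le> (28/25) * N" using N0 by simp
      ultimately show ?thesis by (rule power2_le_imp_le)
    qed
    define e where "e = exp (- c * w)"
    have up: "measure_pmf.prob (poisson_pmf (\<nu> j)) {k. \<nu> j + t \<le> real k} \<le> e" if j: "j < p" for j
    proof -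
      have nj: "0 < \<nu> j" "\<nu> j \<le> N" using assms(2)[OF j] nuN[OF j] by auto
      have "c * w * (2 * \<nu> j + t) \<le> t^2"
      proof -
        have "c * w * (2 * \<nu> j + t) \<le> (191/500) * w * (2 * N + (28/25) * N)"
          using c0 c1 w0 nj tN t0 by (intro mult_mono) auto
        also have "\<dots> \<le> t^2" unfolding t2 using w0 N0 by simp
        finally show ?thesis .
      qed
      hence "c * w \<le> t^2 / (2 * \<nu> j + t)" using nj t0 by (simp add: field_simps)
      hence "exp (- (t^2 / (2 * \<nu> j + t))) \<le> e" unfolding e_def by simp
      thus ?thesis using poisson_upper_tail[OF nj(1) t0] by linarith
    qed
    have low: "measure_pmf.prob (poisson_pmf (\<nu> j)) {k. real k \<le> \<nu> j - t} \<le> e" if j: "j < p" for j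
    proof -
      have nj: "0 < \<nu> j" "\<nu> j \<le> N" using assms(2)[OF j] nuN[OF j] by auto
      have "c * w * (2 * \<nu> j) \<le> t^2"
      proof -
        have "c * w * (2 * \<nu> j) \<le> (191/500) * w * (2 * N)"
          using c0 c1 w0 nj by (intro mult_mono) auto
        also have "\<dots> \<le> t^2" unfolding t2 using w0 N0 by simp
        finally show ?thesis .
      qed
      hence "c * w \<le> t^2 / (2 * \<nu> j)" using nj by (simp add: field_simps)
      hence "exp (- (t^2 / (2 * \<nu> j))) \<le> e" unfolding e_def by simp
      thus ?thesis using poisson_lower_tail[OF nj(1) t0] by linarith
    qed
    define Z where "Z j k = (if \<nu> j - t \<le> real k \<and> real k \<le> \<nu> j + t then (real k - \<nu> j)^2 - real k else 0)"
      for j k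
    define s where "s = N * sqrt (real p) * u"
    have s0: "s \<ge> 0" unfolding s_def using N0 u0 by simp
    have Zb: "Z j k \<in> {-N - 1/4..t^2}" if j: "j < p" for j k
    proof (cases "\<nu> j - t \<le> real k \<and> real k \<le> \<nu> j + t")
      case True
      have "(real k - \<nu> j)^2 \<le> t^2" using True t0 by (intro power2_le_iff_abs_le[THEN iffD2]) auto
      moreover have "(real k - \<nu> j)^2 - (real k - \<nu> j) \<ge> - 1/4"
      proof -
        have "(real k - \<nu> j - 1/2)^2 = (real k - \<nu> j)^2 - (real k - \<nu> j) + 1/4"
          by (simp add: power2_eq_square algebra_simps)
        thus ?thesis using zero_le_power2[of "real k - \<nu> j - 1/2"] by linarith
      qed
      ultimately show ?thesis using True nuN[OF j] by (auto simp: Z_def)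
    qed (use N0 in \<open>auto simp: Z_def\<close>)
    define H where "H = {\<eta>. s \<le> (\<Sum>j<p. Z j (\<eta> j))}"
    have sub: "E \<subseteq> (\<Union>j<p. {\<eta>. \<nu> j + t \<le> real (\<eta> j)}) \<union> (\<Union>j<p. {\<eta>. real (\<eta> j) \<le> \<nu> j - t}) \<union> H"
    proof
      fix \<eta> assume "\<eta> \<in> E"
      show "\<eta> \<in> (\<Union>j<p. {\<eta>. \<nu> j + t \<le> real (\<eta> j)}) \<union> (\<Union>j<p. {\<eta>. real (\<eta> j) \<le> \<nu> j - t}) \<union> H"
      proof (cases "\<forall>j<p. \<nu> j - t < real (\<eta> j) \<and> real (\<eta> j) < \<nu> j + t")
        case True
        have "(\<Sum>j<p. Z j (\<eta> j)) = (\<Sum>j<p. (real (\<eta> j) - \<nu> j)^2 - real (\<eta> j))"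
          using True by (intro sum.cong) (auto simp: Z_def)
        also have "\<dots> = (\<Sum>j<p. (real (\<eta> j) - \<nu> j)^2) - (\<Sum>j<p. real (\<eta> j))"
          by (simp add: sum_subtractf)
        finally have "\<eta> \<in> H" using \<open>\<eta> \<in> E\<close> unfolding H_def E_def s_def N_def by simp
        thus ?thesis by blast
      next
        case False
        then show ?thesis by force
      qed
    qed
    have probH: "measure_pmf.prob Q H \<le> e"
    proof -
      define \<mu> where "\<mu> = (\<Sum>j<p. measure_pmf.expectation Q (\<lambda>\<eta>. Z j (\<eta> j)))"
      interpret Hf: Hoeffding_ineq "measure_pmf Q" "{..<p}" "\<lambda>j \<eta>. Z j (\<eta> j)"
         "\<lambda>_. -N - 1/4" "\<lambda>_. t^2" \<mu>
      proof unfold_locales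
        show "prob_space.indep_vars (measure_pmf Q) (\<lambda>_. borel) (\<lambda>j \<eta>. Z j (\<eta> j)) {..<p}"
          unfolding Q_def
          by (intro prob_space.indep_vars_compose2[OF _ indep_vars_Pi_pmf])
             (auto simp: measure_pmf.prob_space_axioms)
      next
        fix j assume "j \<in> {..<p}"
        thus "AE x in measure_pmf Q. Z j (x j) \<in> {-N - 1/4..t^2}" using Zb by auto
      qed (auto simp: \<mu>_def)
      have mu0: "\<mu> \<le> 0" unfolding \<mu>_def
      proof (intro sum_nonpos)
        fix j assume j: "j \<in> {..<p}"
        have "measure_pmf.expectation Q (\<lambda>\<eta>. Z j (\<eta> j)) = measure_pmf.expectation (poisson_pmf (\<nu> j)) (Z j)"
          unfolding Q_def using j by (intro component_exp) auto
        also have "\<dots> \<le> 0" unfolding Z_def using assms(2) j t1 by (intro trunc_exp_nonpos) auto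
        finally show "measure_pmf.expectation Q (\<lambda>\<eta>. Z j (\<eta> j)) \<le> 0" .
      qed
      define R where "R = t^2 - (-N - 1/4)"
      have R0: "R > 0" unfolding R_def using N0 zero_le_power2[of t] by linarith
      have sumR: "(\<Sum>j<p. (t^2 - (-N - 1/4))^2) = real p * R^2" unfolding R_def by simp
      have D: "(\<Sum>j<p. (t^2 - (-N - 1/4))^2) > 0" using sumR R0 p0 by simp
      have "H \<subseteq> {x \<in> space (measure_pmf Q). (\<Sum>j<p. Z j (x j)) \<ge> \<mu> + s}"
        unfolding H_def using mu0 by auto
      hence "measure_pmf.prob Q H \<le> measure_pmf.prob Q {x \<in> space (measure_pmf Q). (\<Sum>j<p. Z j (x j)) \<ge> \<mu> + s}"
        by (intro measure_pmf.finite_measure_mono) auto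
      also have "\<dots> \<le> exp (-2 * s^2 / (\<Sum>j<p. (t^2 - (-N - 1/4))^2))"
        by (rule Hf.Hoeffding_ineq_ge[OF s0 D])
      also have "\<dots> = exp (-2 * s^2 / (real p * R^2))" by (simp only: sumR)
      also have "\<dots> \<le> e"
      proof -
        have "c * R^2 \<le> 2 * N^2 * w^2"
        proof -
          have "R \<le> (7/4) * N * w"
          proof -
            have "1 < (191/500) * w" using cw c1 w0 mult_right_mono[OF c1, of w] by linarith
            hence "N * 1 \<le> N * ((191/500) * w)" using N0 by (intro mult_left_mono) auto
            hence a: "N \<le> (191/500) * (N * w)" by (simp add: mult_ac)
            have "(13/5)*(13/5) \<le> N*w" using w1 wN by (intro mult_mono) auto
            hence b: "1/4 \<le> (1/10) * (N * w)" by simp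
            have "R = 5/4 * (N * w) + N + 1/4" unfolding R_def t2 by (simp add: mult_ac)
            with a b have "R \<le> (7/4) * (N * w)" by linarith
            thus ?thesis by (simp add: mult_ac)
          qed
          hence "R^2 \<le> ((7/4) * N * w)^2" using R0 by (intro power_mono) auto
          hence "c * R^2 \<le> (191/500) * ((7/4) * N * w)^2" using c0 c1 by (intro mult_mono) auto
          also have "\<dots> \<le> 2 * N^2 * w^2"
          proof -
            have "((7/4) * N * w)^2 = (49/16) * (N^2 * w^2)" by (simp add: power2_eq_square)
            moreover have "0 \<le> N^2 * w^2" by simp
            ultimately show ?thesis by linarith
          qed
          finally show ?thesis .
        qed
        have s2: "s^2 = N^2 * real p * w^3"
          unfolding s_def wu by (simp add: power_mult_distrib)
        have "2 * s^2 / (real p * R^2) = w * (2 * N^2 * w^2) / R^2"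
          unfolding s2 using p0 by (simp add: power3_eq_cube power2_eq_square)
        also have "\<dots> \<ge> w * (c * R^2) / R^2" using \<open>c * R^2 \<le> 2 * N^2 * w^2\<close> w0 R0
          by (intro divide_right_mono mult_left_mono) auto
        finally have "c * w \<le> 2 * s^2 / (real p * R^2)" using R0 by (simp add: mult.commute)
        thus ?thesis unfolding e_def by simp
      qed
      finally show ?thesis .
    qed
    have "measure_pmf.prob Q E \<le> measure_pmf.prob Q ((\<Union>j<p. {\<eta>. \<nu> j + t \<le> real (\<eta> j)}) \<union> (\<Union>j<p. {\<eta>. real (\<eta> j) \<le> \<nu> j - t}) \<union> H)"
      using sub by (intro measure_pmf.finite_measure_mono) auto
    also have "\<dots> \<le> measure_pmf.prob Q (\<Union>j<p. {\<eta>. \<nu> j + t \<le> real (\<eta> j)}) + measure_pmf.prob Q (\<Union>j<p. {\<eta>. real (\<eta> j) \<le> \<nu> j - t}) + measure_pmf.prob Q H"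
    proof -
      have "measure_pmf.prob Q ((\<Union>j<p. {\<eta>. \<nu> j + t \<le> real (\<eta> j)}) \<union> (\<Union>j<p. {\<eta>. real (\<eta> j) \<le> \<nu> j - t}) \<union> H)
        \<le> measure_pmf.prob Q ((\<Union>j<p. {\<eta>. \<nu> j + t \<le> real (\<eta> j)}) \<union> (\<Union>j<p. {\<eta>. real (\<eta> j) \<le> \<nu> j - t})) + measure_pmf.prob Q H"
        by (rule measure_Un_le) auto
      moreover have "measure_pmf.prob Q ((\<Union>j<p. {\<eta>. \<nu> j + t \<le> real (\<eta> j)}) \<union> (\<Union>j<p. {\<eta>. real (\<eta> j) \<le> \<nu> j - t}))
        \<le> measure_pmf.prob Q (\<Union>j<p. {\<eta>. \<nu> j + t \<le> real (\<eta> j)}) + measure_pmf.prob Q (\<Union>j<p. {\<eta>. real (\<eta> j) \<le> \<nu> j - t})"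
        by (rule measure_Un_le) auto
      ultimately show ?thesis by linarith
    qed
    also have "\<dots> \<le> (\<Sum>j<p. measure_pmf.prob Q {\<eta>. \<nu> j + t \<le> real (\<eta> j)}) + (\<Sum>j<p. measure_pmf.prob Q {\<eta>. real (\<eta> j) \<le> \<nu> j - t}) + e"
      by (intro add_mono probH measure_pmf.finite_measure_subadditive_finite) auto
    also have "\<dots> \<le> (\<Sum>j<p. e) + (\<Sum>j<p. e) + e"
      unfolding Q_def
    proof (intro add_mono sum_mono order.refl)
      fix j assume j: "j \<in> {..<p}"
      show "measure_pmf.prob (Pi_pmf {..<p} 0 (\<lambda>j. poisson_pmf (\<nu> j))) {\<eta>. \<nu> j + t \<le> real (\<eta> j)} \<le> e"
        using component_prob[where P="\<lambda>k. \<nu> j + t \<le> real k" and j=j and p=p and \<nu>=\<nu>] up[of j] j by simp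
      show "measure_pmf.prob (Pi_pmf {..<p} 0 (\<lambda>j. poisson_pmf (\<nu> j))) {\<eta>. real (\<eta> j) \<le> \<nu> j - t} \<le> e"
        using component_prob[where P="\<lambda>k. real k \<le> \<nu> j - t" and j=j and p=p and \<nu>=\<nu>] low[of j] j by simp
    qed
    also have "\<dots> = (2 * real p + 1) * e" by (simp add: algebra_simps)
    finally show ?thesis unfolding Q_def E_def e_def c_def w_def by simp
  qed
qed

end
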